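(* Let $0<m<1$, $\mu>0$, $f$ smooth, $u_->u_+=0$, $s=\frac{f(u_+)-f(u_-)}{u_+-u_-}$ with $f'(u_+)=s<f'(u_-)$, and $f''(u_+)=\cdots=f^{(k_+)}(u_+)=0$, $f^{(k_++1)}(u_+)\ne0$ for some integer $k_+\ge1$. Let $U$ be a monotonically decreasing viscous shock profile, i.e. $-sU'+f(U)'=\mu(U^m)''$ with $U(-\infty)=u_-$, $U(+\infty)=u_+$. Then there is a constant $C>0$ such that for all $\xi\in\mathbb{R}$, $$|U_\xi(\xi)|\le CU(\xi)^{k_++2-m},\qquad |U_{\xi\xi}(\xi)|\le CU(\xi)^{2k_++3-2m}.$$ *)

theory Defs
  imports "HOL-Analysis.Analysis"
begin

definition smooth_fun :: "(real \<Rightarrow> real) \<Rightarrow> bool" where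
  "smooth_fun f \<longleftrightarrow> (\<forall>n x. ((deriv ^^ n) f) differentiable (at x))"

end

theory Submission
  imports Defs
begin


lemma smooth_DERIV:
  assumes "smooth_fun f"
  shows "DERIV ((deriv ^^ n) f) x :> (deriv ^^ Suc n) f x"
  using assms unfolding smooth_fun_def
  by (simp add: DERIV_deriv_iff_real_differentiable)

lemma div_le_helper:
  fixes d F M :: real
  assumes "d \<le> M" "1 \<le> F" "0 \<le> M"
  shows "d / F \<le> M"
proof -
  have "M \<le> M * F" using assms mult_left_mono[of 1 F M] by simp
  hence "d \<le> M * F" using assms by linarith
  thus ?thesis using assms by (simp add: divide_le_eq)
qed

lemma taylor_bounds:
  fixes f :: "real \<Rightarrow> real"
  assumes f: "smooth_fun f" and um: "um > 0" and k: "k \<ge> 1"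
    and d1: "deriv f 0 = s"
    and degen: "\<forall>j. 2 \<le> j \<and> j \<le> k \<longrightarrow> (deriv ^^ j) f 0 = 0"
  shows "\<exists>M>0. \<forall>u. 0 < u \<and> u \<le> um \<longrightarrow>
           \<bar>f u - s*u - f 0\<bar> \<le> M * u^(k+1) \<and> \<bar>deriv f u - s\<bar> \<le> M * u^k"
proof -
  have cont: "continuous_on {0..um} ((deriv ^^ (k+1)) f)"
    using f unfolding smooth_fun_def
    by (meson continuous_at_imp_continuous_on differentiable_imp_continuous_within)
  have "bounded ((deriv ^^ (k+1)) f ` {0..um})"
    by (rule compact_imp_bounded, rule compact_continuous_image[OF cont], simp)
  then obtain B where B: "\<And>t. t \<in> {0..um} \<Longrightarrow> \<bar>(deriv ^^ (k+1)) f t\<bar> \<le> B"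
    unfolding bounded_iff real_norm_def by blast
  define M where "M = max 1 B"
  have BM: "\<bar>(deriv ^^ (k+1)) f t\<bar> \<le> M" if "t \<in> {0..um}" for t
    using B[OF that] unfolding M_def by linarith
  have "\<forall>u. 0 < u \<and> u \<le> um \<longrightarrow>
           \<bar>f u - s*u - f 0\<bar> \<le> M * u^(k+1) \<and> \<bar>deriv f u - s\<bar> \<le> M * u^k"
  proof (intro allI impI)
    fix u :: real assume u: "0 < u \<and> u \<le> um"
    obtain t where t: "0 < t" "t < u" and
      eq: "f u = (\<Sum>j<k+1. ((deriv ^^ j) f 0 / fact j) * u ^ j) + ((deriv ^^ (k+1)) f t / fact (k+1)) * u ^ (k+1)"
      using Maclaurin[of u "k+1" "\<lambda>j. (deriv ^^ j) f" f] u smooth_DERIV[OF f] by auto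
    have s0: "(\<Sum>j<k+1. ((deriv ^^ j) f 0 / fact j) * u ^ j) = f 0 + s * u"
    proof -
      have "(\<Sum>j<k+1. ((deriv ^^ j) f 0 / fact j) * u ^ j) = (\<Sum>j<2. ((deriv ^^ j) f 0 / fact j) * u ^ j)"
        using k by (intro sum.mono_neutral_right) (auto simp: degen)
      also have "\<dots> = f 0 + s * u" by (simp add: numeral_2_eq_2 d1)
      finally show ?thesis .
    qed
    have h1: "\<bar>f u - s*u - f 0\<bar> = \<bar>(deriv ^^ (k+1)) f t\<bar> / fact (k+1) * u^(k+1)"
      using eq s0 u by (simp add: abs_mult)
    have "\<bar>(deriv ^^ (k+1)) f t\<bar> / fact (k+1) \<le> M"
    proof -
      have "\<bar>(deriv ^^ (k+1)) f t\<bar> \<le> M" using BM t u by auto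
      moreover have "(1::real) \<le> fact (k+1)" by (rule fact_ge_1)
      moreover have "0 \<le> M" unfolding M_def by simp
      ultimately show ?thesis by (meson div_le_helper)
    qed
    hence A1: "\<bar>f u - s*u - f 0\<bar> \<le> M * u^(k+1)" using h1 u
      by (metis mult_right_mono zero_le_power less_imp_le)
    obtain t2 where t2: "0 < t2" "t2 < u" and
      eq2: "deriv f u = (\<Sum>j<k. ((deriv ^^ Suc j) f 0 / fact j) * u ^ j) + ((deriv ^^ Suc k) f t2 / fact k) * u ^ k"
      proof -
      have "\<forall>m t. m < k \<and> 0 \<le> t \<and> t \<le> u \<longrightarrow> DERIV ((deriv ^^ Suc m) f) t :> (deriv ^^ Suc (Suc m)) f t"
        using smooth_DERIV[OF f] by blast
      then show ?thesis using Maclaurin[of u "k" "\<lambda>j. (deriv ^^ Suc j) f" "deriv f"] u k that by auto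
    qed
    have s1: "(\<Sum>j<k. ((deriv ^^ Suc j) f 0 / fact j) * u ^ j) = s"
    proof -
      have "(\<Sum>j<k. ((deriv ^^ Suc j) f 0 / fact j) * u ^ j) = (\<Sum>j<1. ((deriv ^^ Suc j) f 0 / fact j) * u ^ j)"
      proof (intro sum.mono_neutral_right)
        show "\<forall>i\<in>{..<k} - {..<1}. (deriv ^^ Suc i) f 0 / fact i * u ^ i = 0"
        proof
          fix i assume "i \<in> {..<k} - {..<1}"
          hence "2 \<le> Suc i \<and> Suc i \<le> k" by auto
          hence "(deriv ^^ Suc i) f 0 = 0" using degen[rule_format, of "Suc i"] by (simp only:)
          thus "(deriv ^^ Suc i) f 0 / fact i * u ^ i = 0" by simp
        qed
      qed (use k in auto)
      also have "\<dots> = s" by (simp add: d1)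
      finally show ?thesis .
    qed
    have h2: "\<bar>deriv f u - s\<bar> = \<bar>(deriv ^^ (k+1)) f t2\<bar> / fact k * u^k"
      using eq2 s1 u by (simp add: abs_mult)
    have "\<bar>(deriv ^^ (k+1)) f t2\<bar> / fact k \<le> M"
    proof -
      have "\<bar>(deriv ^^ (k+1)) f t2\<bar> \<le> M" using BM t2 u by auto
      moreover have "(1::real) \<le> fact k" by (rule fact_ge_1)
      moreover have "0 \<le> M" unfolding M_def by simp
      ultimately show ?thesis by (meson div_le_helper)
    qed
    hence A2: "\<bar>deriv f u - s\<bar> \<le> M * u^k" using h2 u
      by (metis mult_right_mono zero_le_power less_imp_le)
    show "\<bar>f u - s*u - f 0\<bar> \<le> M * u^(k+1) \<and> \<bar>deriv f u - s\<bar> \<le> M * u^k" using A1 A2 by simp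
  qed
  moreover have "M > 0" unfolding M_def by simp
  ultimately show ?thesis by blast
qed



theorem lemma6p1:
  fixes f U :: "real \<Rightarrow> real"
    and m \<mu> um up s :: real
    and k :: nat
  assumes m: "0 < m" "m < 1"
    and mu: "\<mu> > 0"
    and f_smooth: "smooth_fun f"
    and states: "um > up" "up = 0"
    and s_def: "s = (f up - f um) / (up - um)"
    and lax: "deriv f up = s" "s < deriv f um"
    and k: "k \<ge> 1"
    and degen: "\<forall>j. 2 \<le> j \<and> j \<le> k \<longrightarrow> (deriv ^^ j) f up = 0"
    and nondegen: "(deriv ^^ (k + 1)) f up \<noteq> 0"
    and U_reg: "\<forall>\<xi>. U differentiable (at \<xi>)" "\<forall>\<xi>. (deriv U) differentiable (at \<xi>)"
    and Um_reg: "\<forall>\<xi>. (\<lambda>x. U x powr m) differentiable (at \<xi>)"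
                "\<forall>\<xi>. deriv (\<lambda>x. U x powr m) differentiable (at \<xi>)"
    and U_mono: "antimono U"
    and U_ode: "\<forall>\<xi>. - s * deriv U \<xi> + deriv (\<lambda>x. f (U x)) \<xi>
                     = \<mu> * deriv (deriv (\<lambda>x. U x powr m)) \<xi>"
    and U_minus: "(U \<longlongrightarrow> um) at_bot"
    and U_plus: "(U \<longlongrightarrow> up) at_top"
  shows "\<exists>C>0. \<forall>\<xi>. \<bar>deriv U \<xi>\<bar> \<le> C * U \<xi> powr (real k + 2 - m)
                   \<and> \<bar>deriv (deriv U) \<xi>\<bar> \<le> C * U \<xi> powr (2 * real k + 3 - 2 * m)"
proof -
  have up0: "up = 0" using states by simp
  have um0: "um > 0" using states by simp
  have fdiff: "\<And>x. DERIV f x :> deriv f x" using smooth_DERIV[OF f_smooth, of 0] by simp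
  have Ud: "\<And>x. DERIV U x :> deriv U x" using U_reg(1) DERIV_deriv_iff_real_differentiable by blast
  have U'd: "\<And>x. DERIV (deriv U) x :> deriv (deriv U) x"
    using U_reg(2) DERIV_deriv_iff_real_differentiable by blast
  define V where "V = (\<lambda>x. U x powr m)"
  define P where "P = deriv V"
  have Vd: "\<And>x. DERIV V x :> P x" unfolding P_def V_def
    using Um_reg(1) DERIV_deriv_iff_real_differentiable by blast
  have Pd: "\<And>x. DERIV P x :> deriv P x" unfolding P_def V_def
    using Um_reg(2) DERIV_deriv_iff_real_differentiable by blast
  have Ucont: "\<And>x. isCont U x" using Ud DERIV_isCont by blast
  have Unonneg: "\<And>x. 0 \<le> U x"
  proof -
    fix x
    have "eventually (\<lambda>i. U i \<le> U x) at_top"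
      using U_mono unfolding antimono_def eventually_at_top_linorder by blast
    thus "0 \<le> U x" using tendsto_upperbound[OF U_plus] up0 by simp
  qed
  have Ule: "\<And>x. U x \<le> um"
  proof -
    fix x
    have "eventually (\<lambda>i. U x \<le> U i) at_bot"
      using U_mono unfolding antimono_def eventually_at_bot_linorder by blast
    thus "U x \<le> um" using tendsto_lowerbound[OF U_minus] by simp
  qed
  have U'nonpos: "\<And>x. deriv U x \<le> 0"
  proof (rule ccontr)
    fix x assume "\<not> deriv U x \<le> 0"
    then obtain d where d: "d > 0" "\<forall>h>0. h < d \<longrightarrow> U x < U (x + h)"
      using DERIV_pos_inc_right[OF Ud[of x]] by auto
    hence "U x < U (x + d/2)" by simp
    moreover have "U (x + d/2) \<le> U x" using U_mono d(1) unfolding antimono_def by simp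
    ultimately show False by simp
  qed
  define g where "g x = \<mu> * P x + s * U x - f (U x)" for x
  have gd: "DERIV g x :> 0" for x
  proof -
    have ch: "DERIV (\<lambda>x. f (U x)) x :> deriv f (U x) * deriv U x"
      using DERIV_chain2[OF fdiff Ud] .
    have "DERIV g x :> \<mu> * deriv P x + s * deriv U x - deriv f (U x) * deriv U x"
      unfolding g_def[abs_def]
      by (intro DERIV_diff DERIV_add DERIV_cmult Pd Ud ch)
    moreover have "\<mu> * deriv P x + s * deriv U x - deriv f (U x) * deriv U x = 0"
      using U_ode[rule_format, of x] DERIV_imp_deriv[OF ch] unfolding P_def V_def by simp
    ultimately show ?thesis by simp
  qed
  have gc: "\<And>x. g x = g 0" using gd DERIV_isconst_all by blast
  define L where "L = (g 0 + f 0) / \<mu>"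
  have Peq: "P x = (g 0 - s * U x + f (U x)) / \<mu>" for x
    using gc[of x] mu unfolding g_def by (simp add: field_simps)
  have fcont: "isCont f x" for x using fdiff DERIV_isCont by blast
  have Plim: "(P \<longlongrightarrow> L) at_top"
  proof -
    have U0: "(U \<longlongrightarrow> 0) at_top" using U_plus up0 by simp
    have "((\<lambda>x. f (U x)) \<longlongrightarrow> f 0) at_top"
      using isCont_tendsto_compose[OF fcont U0] .
    hence "((\<lambda>x. (g 0 - s * U x + f (U x)) / \<mu>) \<longlongrightarrow> (g 0 - s * 0 + f 0) / \<mu>) at_top"
      using mu by (intro tendsto_intros U0) auto
    moreover have PP: "P = (\<lambda>x. (g 0 - s * U x + f (U x)) / \<mu>)" using Peq by blast
    ultimately show ?thesis unfolding L_def by simp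
  qed
  have L0: "L = 0"
  proof -
    have "\<forall>n::nat. \<exists>z. real n < z \<and> z < real n + 1 \<and> V (real n + 1) - V (real n) = (real n + 1 - real n) * P z"
    proof
      fix n :: nat
      show "\<exists>z. real n < z \<and> z < real n + 1 \<and> V (real n + 1) - V (real n) = (real n + 1 - real n) * P z"
        using MVT2[OF _ Vd, of "real n" "real n + 1"] by simp
    qed
    then obtain z where z: "\<And>n. real n < z n \<and> z n < real n + 1 \<and> V (real n + 1) - V (real n) = P (z n)"
      by (metis add_diff_cancel_left' mult_1)
    have Vlim: "(V \<longlongrightarrow> 0) at_top" unfolding V_def
      by (rule tendsto_zero_powrI[OF _ tendsto_const]) (use U_plus up0 Unonneg m in auto)
    have X: "(\<lambda>n. V (real n)) \<longlonglongrightarrow> 0"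
      using filterlim_compose[OF Vlim filterlim_real_sequentially] .
    have X1: "(\<lambda>n. V (real (Suc n))) \<longlonglongrightarrow> 0" using LIMSEQ_Suc[OF X] .
    have "(\<lambda>n. V (real n + 1) - V (real n)) \<longlonglongrightarrow> 0 - 0"
      using tendsto_diff[OF X1 X] by (simp add: add.commute)
    hence A: "(\<lambda>n. P (z n)) \<longlonglongrightarrow> 0" using z by simp
    have zlim: "filterlim z at_top sequentially"
      by (rule filterlim_at_top_mono[OF filterlim_real_sequentially]) (use z less_imp_le in \<open>auto intro!: always_eventually\<close>)
    have B: "(\<lambda>n. P (z n)) \<longlonglongrightarrow> L" using filterlim_compose[OF Plim zlim] .
    show ?thesis using LIMSEQ_unique[OF B A] .
  qed
  have key: "\<mu> * P x = f (U x) - s * U x - f 0" for x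
    using Peq[of x] L0 mu unfolding L_def by (simp add: field_simps)
  define h where "h u = f u - s * u - f 0" for u
  obtain M where M: "M > 0" and
    Mb: "\<And>u. 0 < u \<Longrightarrow> u \<le> um \<Longrightarrow> \<bar>h u\<bar> \<le> M * u powr (real k + 1) \<and> \<bar>deriv f u - s\<bar> \<le> M * u powr (real k)"
  proof -
    obtain M where "M > 0" and "\<forall>u. 0 < u \<and> u \<le> um \<longrightarrow>
           \<bar>f u - s*u - f 0\<bar> \<le> M * u^(k+1) \<and> \<bar>deriv f u - s\<bar> \<le> M * u^k"
      using taylor_bounds[OF f_smooth um0 k] lax(1) degen up0 by auto
    moreover have "u powr (real k + 1) = u ^ (k+1)" if "u > 0" for u :: real
      using powr_realpow[OF that, of "k+1"] by (simp add: add.commute)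
    moreover have "u powr (real k) = u ^ k" if "u > 0" for u :: real
      using powr_realpow[OF that, of "k"] by simp
    ultimately show ?thesis using that unfolding h_def by auto
  qed
  define K where "K = M / (\<mu> * m)"
  have K0: "K > 0" unfolding K_def using M mu m by simp
  have U'eq: "deriv U x = U x powr (1 - m) * h (U x) / (\<mu> * m)" if pos: "U x > 0" for x
  proof -
    have "DERIV V x :> m * U x powr (m - of_nat 1) * deriv U x"
      unfolding V_def by (rule DERIV_fun_powr[OF Ud pos])
    hence Px: "P x = m * U x powr (m - 1) * deriv U x" using DERIV_unique[OF Vd] by simp
    have one: "U x powr (m - 1) * U x powr (1 - m) = 1"
      using pos by (simp add: powr_add[symmetric])
    have "U x powr (1 - m) * h (U x) / (\<mu> * m) = U x powr (1 - m) * (\<mu> * P x) / (\<mu> * m)"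
      using key[of x] unfolding h_def by simp
    also have "\<dots> = (U x powr (m - 1) * U x powr (1 - m)) * deriv U x"
      using mu m by (simp add: Px field_simps)
    finally show ?thesis using one by simp
  qed
  have b1: "\<bar>deriv U x\<bar> \<le> K * U x powr (real k + 2 - m)" if pos: "U x > 0" for x
  proof -
    have hb: "\<bar>h (U x)\<bar> \<le> M * U x powr (real k + 1)" using Mb[OF pos Ule] by simp
    have "\<bar>deriv U x\<bar> = U x powr (1 - m) * \<bar>h (U x)\<bar> / (\<mu> * m)"
      using U'eq[OF pos] mu m by (simp add: abs_mult)
    also have "\<dots> \<le> U x powr (1 - m) * (M * U x powr (real k + 1)) / (\<mu> * m)"
      using hb mu m by (intro divide_right_mono mult_left_mono) auto
    also have "\<dots> = K * (U x powr (1 - m) * U x powr (real k + 1))"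
      unfolding K_def by simp
    also have "U x powr (1 - m) * U x powr (real k + 1) = U x powr ((1 - m) + (real k + 1))"
      by (simp only: powr_add)
    also have "(1 - m) + (real k + 1) = real k + 2 - m" by simp
    finally show ?thesis .
  qed
  have b2: "\<bar>deriv (deriv U) x\<bar> \<le> (2 * K * M / (\<mu> * m)) * U x powr (2 * real k + 3 - 2 * m)"
    if pos: "U x > 0" for x
  proof -
    define S where "S = {y. 0 < U y}"
    have Sopen: "open S" unfolding S_def
      by (rule open_Collect_less) (use Ucont continuous_at_imp_continuous_on in auto)
    have xS: "x \<in> S" using pos S_def by simp
    define \<phi> where "\<phi> y = U y powr (1 - m) * h (U y) / (\<mu> * m)" for y
    have hd: "DERIV h u :> deriv f u - s" for u
      unfolding h_def[abs_def] using fdiff[of u]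
      by (auto intro!: derivative_eq_intros)
    have d1: "DERIV (\<lambda>y. U y powr (1 - m)) x :> (1 - m) * U x powr ((1 - m) - of_nat 1) * deriv U x"
      by (rule DERIV_fun_powr[OF Ud pos])
    have d2: "DERIV (\<lambda>y. h (U y)) x :> (deriv f (U x) - s) * deriv U x"
      by (rule DERIV_chain2[OF hd Ud])
    define D where "D = ((1 - m) * U x powr (- m) * deriv U x * h (U x)
        + (deriv f (U x) - s) * deriv U x * U x powr (1 - m)) / (\<mu> * m)"
    have "DERIV \<phi> x :> D"
      unfolding \<phi>_def[abs_def] D_def using DERIV_cdivide[OF DERIV_mult[OF d1 d2], of "\<mu> * m"]
      by simp
    hence "DERIV (deriv U) x :> D"
      by (rule has_field_derivative_transform_within_open[OF _ Sopen xS])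
         (use U'eq S_def \<phi>_def in auto)
    hence Deq: "deriv (deriv U) x = D" using DERIV_unique[OF U'd] by blast
    define u where "u = U x"
    have u0: "u > 0" using pos u_def by simp
    have ha: "\<bar>deriv U x\<bar> \<le> K * u powr (real k + 2 - m)" using b1[OF pos] u_def by simp
    have hb: "\<bar>h u\<bar> \<le> M * u powr (real k + 1)" and hc: "\<bar>deriv f u - s\<bar> \<le> M * u powr (real k)"
      using Mb[OF u0] Ule u_def by auto
    have "\<bar>D\<bar> \<le> (\<bar>(1 - m) * u powr (- m) * deriv U x * h u\<bar>
        + \<bar>(deriv f u - s) * deriv U x * u powr (1 - m)\<bar>) / (\<mu> * m)"
      unfolding D_def u_def using mu m
      by (simp add: divide_right_mono abs_triangle_ineq)
    also have "\<dots> = ((1 - m) * u powr (- m) * \<bar>deriv U x\<bar> * \<bar>h u\<bar>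
        + \<bar>deriv f u - s\<bar> * \<bar>deriv U x\<bar> * u powr (1 - m)) / (\<mu> * m)"
      using m by (simp add: abs_mult)
    also have "\<dots> \<le> (1 * u powr (- m) * (K * u powr (real k + 2 - m)) * (M * u powr (real k + 1))
        + (M * u powr (real k)) * (K * u powr (real k + 2 - m)) * u powr (1 - m)) / (\<mu> * m)"
      using mu m ha hb hc K0 M
      by (intro divide_right_mono add_mono mult_mono mult_right_mono) auto
    also have "\<dots> = (2 * K * M / (\<mu> * m)) * u powr (2 * real k + 3 - 2 * m)"
    proof -
      have e1: "u powr (- m) * u powr (real k + 2 - m) * u powr (real k + 1) = u powr (2 * real k + 3 - 2 * m)"
      proof -
        have "u powr (- m) * u powr (real k + 2 - m) * u powr (real k + 1) = u powr ((- m) + (real k + 2 - m) + (real k + 1))"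
          by (simp only: powr_add)
        also have "(- m) + (real k + 2 - m) + (real k + 1) = 2 * real k + 3 - 2 * m" by simp
        finally show ?thesis .
      qed
      have e2: "u powr (real k) * u powr (real k + 2 - m) * u powr (1 - m) = u powr (2 * real k + 3 - 2 * m)"
      proof -
        have "u powr (real k) * u powr (real k + 2 - m) * u powr (1 - m) = u powr ((real k) + (real k + 2 - m) + (1 - m))"
          by (simp only: powr_add)
        also have "(real k) + (real k + 2 - m) + (1 - m) = 2 * real k + 3 - 2 * m" by simp
        finally show ?thesis .
      qed
      have "1 * u powr (- m) * (K * u powr (real k + 2 - m)) * (M * u powr (real k + 1))
        + (M * u powr (real k)) * (K * u powr (real k + 2 - m)) * u powr (1 - m)
        = K * M * (u powr (- m) * u powr (real k + 2 - m) * u powr (real k + 1))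
          + K * M * (u powr (real k) * u powr (real k + 2 - m) * u powr (1 - m))"
        by (simp only: mult_ac mult_1)
      also have "\<dots> = 2 * K * M * u powr (2 * real k + 3 - 2 * m)" unfolding e1 e2 by simp
      finally show ?thesis by simp
    qed
    finally show ?thesis using Deq u_def by simp
  qed
  define C where "C = max 1 (max K (2 * K * M / (\<mu> * m)))"
  have C0: "C > 0" unfolding C_def by simp
  have "\<forall>\<xi>. \<bar>deriv U \<xi>\<bar> \<le> C * U \<xi> powr (real k + 2 - m)
                   \<and> \<bar>deriv (deriv U) \<xi>\<bar> \<le> C * U \<xi> powr (2 * real k + 3 - 2 * m)"
  proof
    fix x
    show "\<bar>deriv U x\<bar> \<le> C * U x powr (real k + 2 - m)
                   \<and> \<bar>deriv (deriv U) x\<bar> \<le> C * U x powr (2 * real k + 3 - 2 * m)"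
    proof (cases "U x > 0")
      case True
      have p1: "0 \<le> U x powr (real k + 2 - m)" "0 \<le> U x powr (2 * real k + 3 - 2 * m)" by auto
      have "K \<le> C" "2 * K * M / (\<mu> * m) \<le> C" unfolding C_def by auto
      hence "K * U x powr (real k + 2 - m) \<le> C * U x powr (real k + 2 - m)"
        "2 * K * M / (\<mu> * m) * U x powr (2 * real k + 3 - 2 * m) \<le> C * U x powr (2 * real k + 3 - 2 * m)"
        using mult_right_mono[OF _ p1(1)] mult_right_mono[OF _ p1(2)] by blast+
      thus ?thesis using b1[OF True] b2[OF True] by linarith
    next
      case False
      hence U0: "U x = 0" using Unonneg[of x] by simp
      have "deriv U x = 0"
        by (rule DERIV_local_min[OF Ud zero_less_one]) (use U0 Unonneg in auto)
      moreover have "deriv (deriv U) x = 0"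
        by (rule DERIV_local_max[OF U'd zero_less_one]) (use \<open>deriv U x = 0\<close> U'nonpos in auto)
      ultimately show ?thesis using U0 by simp
    qed
  qed
  thus ?thesis using C0 by blast
qed

end
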